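(* Let $X$ and $X^n$, $n\ge1$, be stochastic processes with sample paths in $D_{\mathbb{R}}[0,1]$. Assume that each $X^n$ is constant on each of the intervals $[0,2^{-n}),[2^{-n},2\cdot2^{-n}),\dots,[(2^n-1)2^{-n},1)$ and that $$\max_{d\in\mathcal{D}_n}|X^n_d-X_d|\to0\quad\text{almost surely as }n\to\infty,$$ where $\mathcal{D}_n=\{0,2^{-n},\dots,(2^n-1)2^{-n},1\}$. Then $X^n\to X$ almost surely in Skorokhod's $J_1$ topology.
   Context: $D_{\mathbb{R}}[0,1]$ is the space of real-valued càdlàg functions on $[0,1]$. Skorokhod's $J_1$ topology is induced by $d_{J_1}(x,y)=\inf_{\lambda\in\Lambda}\big(\sup_{t\in[0,1]}|\lambda(t)-t|+\sup_{t\in[0,1]}|x(\lambda(t))-y(t)|\big)$, where $\Lambda$ is the set of all increasing homeomorphisms $\lambda:[0,1]\to[0,1]$. *)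

theory Defs
  imports "HOL-Probability.Probability"
begin

text \<open>Real-valued cadlag functions on [0,1]: right-continuous at every t in [0,1),
  left limits at every t in (0,1]. Values outside [0,1] are irrelevant.\<close>
definition cadlag :: "(real \<Rightarrow> real) \<Rightarrow> bool" where
  "cadlag x \<longleftrightarrow>
     (\<forall>t\<in>{0..<1}. (x \<longlongrightarrow> x t) (at_right t)) \<and>
     (\<forall>t\<in>{0<..1}. \<exists>l. (x \<longlongrightarrow> l) (at_left t))"

definition Lambda :: "(real \<Rightarrow> real) set" where
  "Lambda = {lam. mono_on {0..1} lam \<and> (\<exists>mu. homeomorphism {0..1} {0..1} lam mu)}"

definition dJ1 :: "(real \<Rightarrow> real) \<Rightarrow> (real \<Rightarrow> real) \<Rightarrow> real" where
  "dJ1 x y = (INF lam\<in>Lambda. (SUP t\<in>{0..1}. \<bar>lam t - t\<bar>) + (SUP t\<in>{0..1}. \<bar>x (lam t) - y t\<bar>))"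

definition dyadic :: "nat \<Rightarrow> real set" where
  "dyadic n = {real k / 2 ^ n | k. k \<le> 2 ^ n}"

end

theory Submission
  imports Defs
begin


lemma chain_less:
  fixes t :: "nat \<Rightarrow> real"
  assumes "\<forall>i<k. t i < t (Suc i)" "i < j" "j \<le> k"
  shows "t i < t j"
  using assms(2,3)
proof (induction j)
  case 0 then show ?case by simp
next
  case (Suc j)
  show ?case
  proof (cases "i = j")
    case True then show ?thesis using assms(1) Suc by auto
  next
    case False
    then have "t i < t j" using Suc by auto
    also have "t j < t (Suc j)" using assms(1) Suc by auto
    finally show ?thesis .
  qed
qed

lemma chain_le:
  fixes t :: "nat \<Rightarrow> real"
  assumes "\<forall>i<k. t i < t (Suc i)" "i \<le> j" "j \<le> k"
  shows "t i \<le> t j"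
  using chain_less[OF assms(1), of i j] assms by (cases "i = j") auto

lemma locate:
  fixes t :: "nat \<Rightarrow> real"
  assumes "\<forall>i<k. t i < t (Suc i)" "t 0 \<le> u" "u < t k"
  shows "\<exists>i<k. t i \<le> u \<and> u < t (Suc i)"
  using assms
proof (induction k)
  case 0 then show ?case by simp
next
  case (Suc k)
  show ?case
  proof (cases "u < t k")
    case True
    with Suc obtain i where "i<k" "t i \<le> u \<and> u < t (Suc i)" by auto
    then show ?thesis by (intro exI[of _ i]) auto
  next
    case False
    then show ?thesis using Suc by (intro exI[of _ k]) auto
  qed
qed

definition goodp :: "(real \<Rightarrow> real) \<Rightarrow> real \<Rightarrow> nat \<Rightarrow> (nat \<Rightarrow> real) \<Rightarrow> bool" where
  "goodp x e k t \<longleftrightarrow> t 0 = 0 \<and> (\<forall>i<k. t i < t (Suc i)) \<and>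
     (\<forall>i<k. \<forall>u\<in>{t i..<t (Suc i)}. \<bar>x u - x (t i)\<bar> < e)"

lemma goodp_extend:
  assumes "goodp x e k t" "t k < m" "\<forall>u\<in>{t k..<m}. \<bar>x u - x (t k)\<bar> < e"
  shows "goodp x e (Suc k) (t(Suc k := m))"
  using assms unfolding goodp_def
  by (auto simp: less_Suc_eq)

lemma partition_exists:
  fixes x :: "real \<Rightarrow> real"
  assumes "cadlag x" "e > 0"
  shows "\<exists>k t. goodp x e k t \<and> t k = 1"
proof -
  define S where "S = {s\<in>{0..1}. \<exists>k t. goodp x e k t \<and> t k = s}"
  have g0: "goodp x e 0 (\<lambda>_. 0)" by (simp add: goodp_def)
  have "0 \<in> S" unfolding S_def using g0 by auto
  then have Sne: "S \<noteq> {}" by auto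
  have Sbdd: "bdd_above S" unfolding S_def by (auto intro!: bdd_aboveI[of _ 1])
  define m where "m = Sup S"
  have m0: "0 \<le> m" unfolding m_def using \<open>0 \<in> S\<close> Sbdd by (rule cSup_upper)
  have m1: "m \<le> 1" unfolding m_def using Sne by (rule cSup_least) (auto simp: S_def)
  have mS: "m \<in> S"
  proof (cases "m = 0")
    case True then show ?thesis using \<open>0 \<in> S\<close> by simp
  next
    case False
    then have mpos: "0 < m" using m0 by simp
    from assms(1) mpos m1 obtain l where l: "(x \<longlongrightarrow> l) (at_left m)"
      unfolding cadlag_def by (meson greaterThanAtMost_iff)
    from tendstoD[OF l, of "e/2"] assms(2)
    have "eventually (\<lambda>u. dist (x u) l < e/2) (at_left m)" by simp
    then obtain b where b: "b < m" "\<And>u. b < u \<Longrightarrow> u < m \<Longrightarrow> dist (x u) l < e/2"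
      unfolding eventually_at_left_field by auto
    have "b < Sup S" using b m_def by simp
    then obtain s where s: "s \<in> S" "b < s" using less_cSup_iff[OF Sne Sbdd] by auto
    have "s \<le> m" unfolding m_def using s Sbdd by (simp add: cSup_upper)
    show ?thesis
    proof (cases "s = m")
      case True then show ?thesis using s by simp
    next
      case False
      with \<open>s \<le> m\<close> have sm: "s < m" by simp
      from s obtain k t where kt: "goodp x e k t" "t k = s" unfolding S_def by auto
      have "\<forall>u\<in>{t k..<m}. \<bar>x u - x (t k)\<bar> < e"
      proof
        fix u assume u: "u \<in> {t k..<m}"
        have "dist (x u) l < e/2" using b(2)[of u] u kt s by auto
        moreover have "dist (x s) l < e/2" using b(2)[of s] s sm by auto
        ultimately have "\<bar>x u - x s\<bar> < e" unfolding dist_real_def by linarith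
        then show "\<bar>x u - x (t k)\<bar> < e" using kt by simp
      qed
      from goodp_extend[OF kt(1) _ this] kt sm
      have "goodp x e (Suc k) (t(Suc k := m))" by simp
      then show ?thesis unfolding S_def using m0 m1
        by (intro CollectI conjI exI[of _ "Suc k"] exI[of _ "t(Suc k := m)"]) auto
    qed
  qed
  have "m = 1"
  proof (rule ccontr)
    assume "m \<noteq> 1"
    then have m1': "m < 1" using m1 by simp
    from assms(1) m0 m1' have r: "(x \<longlongrightarrow> x m) (at_right m)"
      unfolding cadlag_def by auto
    from tendstoD[OF r, of e] assms(2)
    have "eventually (\<lambda>u. dist (x u) (x m) < e) (at_right m)" by simp
    then obtain b where b: "m < b" "\<And>u. m < u \<Longrightarrow> u < b \<Longrightarrow> dist (x u) (x m) < e"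
      unfolding eventually_at_right_field by auto
    define m' where "m' = min b 1"
    from mS obtain k t where kt: "goodp x e k t" "t k = m" unfolding S_def by auto
    have "\<forall>u\<in>{t k..<m'}. \<bar>x u - x (t k)\<bar> < e"
    proof
      fix u assume u: "u \<in> {t k..<m'}"
      show "\<bar>x u - x (t k)\<bar> < e"
      proof (cases "u = m")
        case True then show ?thesis using kt assms(2) by simp
      next
        case False
        then show ?thesis using b(2)[of u] u kt by (auto simp: dist_real_def m'_def)
      qed
    qed
    from goodp_extend[OF kt(1) _ this] kt b m1'
    have "goodp x e (Suc k) (t(Suc k := m'))" by (simp add: m'_def)
    then have "m' \<in> S" unfolding S_def using m0 b m1'
      by (intro CollectI conjI exI[of _ "Suc k"] exI[of _ "t(Suc k := m')"]) (auto simp: m'_def)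
    then have "m' \<le> m" unfolding m_def using Sbdd by (simp add: cSup_upper)
    then show False using b m1' by (simp add: m'_def)
  qed
  with mS show ?thesis unfolding S_def by auto
qed

lemma cadlag_bounded:
  fixes x :: "real \<Rightarrow> real"
  assumes "cadlag x"
  shows "\<exists>B. \<forall>u\<in>{0..1}. \<bar>x u\<bar> \<le> B"
proof -
  obtain k t where kt: "goodp x 1 k t" "t k = 1" using partition_exists[OF assms, of 1] by auto
  define B where "B = (\<Sum>i\<le>k. \<bar>x (t i)\<bar>) + 1"
  have le: "\<bar>x (t i)\<bar> \<le> (\<Sum>i\<le>k. \<bar>x (t i)\<bar>)" if "i \<le> k" for i
    using that by (intro member_le_sum) auto
  have "\<bar>x u\<bar> \<le> B" if u: "u \<in> {0..1}" for u
  proof (cases "u = 1")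
    case True then show ?thesis using le[of k] kt by (simp add: B_def)
  next
    case False
    then obtain i where i: "i < k" "t i \<le> u" "u < t (Suc i)"
      using locate[of k t u] kt u unfolding goodp_def by auto
    then have "\<bar>x u - x (t i)\<bar> < 1" using kt unfolding goodp_def by auto
    moreover have "\<bar>x (t i)\<bar> \<le> (\<Sum>i\<le>k. \<bar>x (t i)\<bar>)" using le[of i] i by simp
    ultimately show ?thesis unfolding B_def by linarith
  qed
  then show ?thesis by blast
qed

lemma dyadic_floor:
  fixes u :: real and n :: nat
  assumes "0 \<le> u" "u < 1"
  defines "c \<equiv> nat \<lfloor>u * 2 ^ n\<rfloor>"
  shows "c < 2 ^ n" "real c / 2 ^ n \<le> u" "u < real (c + 1) / 2 ^ n" "real c = of_int \<lfloor>u * 2 ^ n\<rfloor>"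
proof -
  have p: "(0::real) < 2 ^ n" by simp
  have f0: "0 \<le> \<lfloor>u * 2 ^ n\<rfloor>" using assms by simp
  show rc: "real c = of_int \<lfloor>u * 2 ^ n\<rfloor>" using f0 unfolding c_def by simp
  have "of_int \<lfloor>u * 2 ^ n\<rfloor> \<le> u * 2 ^ n" by (rule of_int_floor_le)
  then show "real c / 2 ^ n \<le> u" using rc p by (simp add: divide_le_eq)
  have "\<lfloor>u * 2 ^ n\<rfloor> < \<lfloor>u * 2 ^ n\<rfloor> + 1" by simp
  then have "u * 2 ^ n < of_int (\<lfloor>u * 2 ^ n\<rfloor> + 1)" by (simp only: floor_less_iff)
  then have "u * 2 ^ n < of_int \<lfloor>u * 2 ^ n\<rfloor> + 1" by simp
  moreover have "real (c + 1) = of_int \<lfloor>u * 2 ^ n\<rfloor> + 1" using rc by simp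
  ultimately have "u * 2 ^ n < real (c + 1)" by linarith
  then show "u < real (c + 1) / 2 ^ n" unfolding pos_less_divide_eq[OF p] .
  have "u * 2 ^ n < 2 ^ n" using assms p by simp
  moreover have e2: "real ((2::nat) ^ n) = (2::real) ^ n" by simp
  ultimately have "real c < real (2 ^ n)" using rc \<open>of_int \<lfloor>u * 2 ^ n\<rfloor> \<le> u * 2 ^ n\<close> by linarith
  then show "c < 2 ^ n" by (simp only: of_nat_less_iff)
qed

lemma step_bounded:
  fixes y :: "real \<Rightarrow> real"
  assumes "\<forall>k<(2::nat) ^ n. \<forall>t\<in>{real k / 2 ^ n..<real (k + 1) / 2 ^ n}. y t = y (real k / 2 ^ n)"
  shows "\<exists>B. \<forall>u\<in>{0..1}. \<bar>y u\<bar> \<le> B"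
proof -
  define B where "B = (\<Sum>k\<le>(2::nat)^n. \<bar>y (real k / 2 ^ n)\<bar>)"
  have le: "\<bar>y (real k / 2 ^ n)\<bar> \<le> B" if "k \<le> 2 ^ n" for k
    using that unfolding B_def by (intro member_le_sum) auto
  have "\<bar>y u\<bar> \<le> B" if u: "u \<in> {0..1}" for u
  proof (cases "u = 1")
    case True then show ?thesis using le[of "2^n"] by simp
  next
    case False
    with u have u': "0 \<le> u" "u < 1" by auto
    define c where "c = nat \<lfloor>u * 2 ^ n\<rfloor>"
    note d = dyadic_floor[OF u', of n, folded c_def]
    have "\<forall>t\<in>{real c / 2 ^ n..<real (c + 1) / 2 ^ n}. y t = y (real c / 2 ^ n)"
      using assms d(1) by blast
    then have "y u = y (real c / 2 ^ n)" using d(2,3) by (meson atLeastLessThan_iff)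
    then show ?thesis using le[of c] d by simp
  qed
  then show ?thesis by blast
qed

lemma Lambda_maps: "lam \<in> Lambda \<Longrightarrow> t \<in> {0..1} \<Longrightarrow> lam t \<in> {0..(1::real)}"
  unfolding Lambda_def homeomorphism_def by blast

lemma id_Lambda: "(\<lambda>t. t) \<in> Lambda"
  unfolding Lambda_def using homeomorphism_ident by (auto simp: mono_on_def)

lemma dJ1_bounds:
  fixes x y :: "real \<Rightarrow> real"
  assumes bx: "\<forall>u\<in>{0..1}. \<bar>x u\<bar> \<le> Bx" and hy: "\<forall>u\<in>{0..1}. \<bar>y u\<bar> \<le> By"
  shows "0 \<le> dJ1 y x"
    and "lam \<in> Lambda \<Longrightarrow> (\<forall>t\<in>{0..1}. \<bar>lam t - t\<bar> \<le> a) \<Longrightarrow>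
          (\<forall>t\<in>{0..1}. \<bar>y (lam t) - x t\<bar> \<le> b) \<Longrightarrow> dJ1 y x \<le> a + b"
proof -
  define F where "F lam = (SUP t\<in>{0..1}. \<bar>lam t - t\<bar>) + (SUP t\<in>{0..1}. \<bar>y (lam t) - x t\<bar>)"
    for lam :: "real \<Rightarrow> real"
  have Fnn: "0 \<le> F lam" if lam: "lam \<in> Lambda" for lam
  proof -
    have b1: "bdd_above ((\<lambda>t. \<bar>lam t - t\<bar>) ` {0..1})"
    proof (intro bdd_aboveI[of _ 2])
      fix z assume "z \<in> (\<lambda>t. \<bar>lam t - t\<bar>) ` {0..1}"
      then obtain t where t: "t \<in> {0..1}" "z = \<bar>lam t - t\<bar>" by auto
      show "z \<le> 2" using Lambda_maps[OF lam t(1)] t by auto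
    qed
    have b2: "bdd_above ((\<lambda>t. \<bar>y (lam t) - x t\<bar>) ` {0..1})"
    proof (intro bdd_aboveI[of _ "Bx + By"])
      fix z assume "z \<in> (\<lambda>t. \<bar>y (lam t) - x t\<bar>) ` {0..1}"
      then obtain t where t: "t \<in> {0..1}" "z = \<bar>y (lam t) - x t\<bar>" by auto
      have "\<bar>y (lam t)\<bar> \<le> By" using hy Lambda_maps[OF lam t(1)] by auto
      moreover have "\<bar>x t\<bar> \<le> Bx" using bx t by auto
      ultimately show "z \<le> Bx + By" using t by linarith
    qed
    have "0 \<le> \<bar>lam 0 - 0\<bar>" by simp
    also have "\<dots> \<le> (SUP t\<in>{0..1}. \<bar>lam t - t\<bar>)" using b1 by (intro cSUP_upper) auto
    finally have s1: "0 \<le> (SUP t\<in>{0..1}. \<bar>lam t - t\<bar>)" .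
    have "0 \<le> \<bar>y (lam 0) - x 0\<bar>" by simp
    also have "\<dots> \<le> (SUP t\<in>{0..1}. \<bar>y (lam t) - x t\<bar>)" using b2 by (intro cSUP_upper) auto
    finally have s2: "0 \<le> (SUP t\<in>{0..1}. \<bar>y (lam t) - x t\<bar>)" .
    show ?thesis using s1 s2 unfolding F_def by simp
  qed
  have dJ: "dJ1 y x = (INF lam\<in>Lambda. F lam)" unfolding dJ1_def F_def by simp
  show "0 \<le> dJ1 y x" unfolding dJ using id_Lambda Fnn by (intro cINF_greatest) auto
  assume lam: "lam \<in> Lambda" and a: "\<forall>t\<in>{0..1}. \<bar>lam t - t\<bar> \<le> a"
    and b: "\<forall>t\<in>{0..1}. \<bar>y (lam t) - x t\<bar> \<le> b"
  have "(SUP t\<in>{0..1}. \<bar>lam t - t\<bar>) \<le> a" using a by (intro cSUP_least) auto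
  moreover have "(SUP t\<in>{0..1}. \<bar>y (lam t) - x t\<bar>) \<le> b" using b by (intro cSUP_least) auto
  ultimately have "F lam \<le> a + b" unfolding F_def by simp
  moreover have "bdd_below (F ` Lambda)" using Fnn by (intro bdd_belowI[of _ 0]) auto
  ultimately show "dJ1 y x \<le> a + b" unfolding dJ using lam by (intro cINF_lower2) auto
qed

lemma construct_lam:
  fixes t \<tau> :: "nat \<Rightarrow> real" and \<delta> :: real
  assumes tc: "\<forall>i<k. t i < t (Suc i)" and \<tau>c: "\<forall>i<k. \<tau> i < \<tau> (Suc i)"
    and t0: "t 0 = 0" and \<tau>0: "\<tau> 0 = 0" and tk: "t k = 1" and \<tau>k: "\<tau> k = 1"
    and close: "\<forall>i\<le>k. t i \<le> \<tau> i \<and> \<tau> i \<le> t i + \<delta>"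
  shows "\<exists>lam\<in>Lambda. (\<forall>s\<in>{0..1}. \<bar>lam s - s\<bar> \<le> \<delta>) \<and> lam 1 = 1 \<and>
           (\<forall>j<k. \<forall>s\<in>{t j..<t (Suc j)}. \<tau> j \<le> lam s \<and> lam s < \<tau> (Suc j))"
proof -
  define r where "r i s = max 0 (min 1 ((s - t i) / (t (Suc i) - t i)))" for i s
  define lam where "lam s = (\<Sum>i<k. (\<tau> (Suc i) - \<tau> i) * r i s)" for s
  have k0: "0 < k" using t0 tk by (cases k) auto
  have gap: "0 < t (Suc i) - t i" if "i < k" for i using tc that by auto
  have gap\<tau>: "0 < \<tau> (Suc i) - \<tau> i" if "i < k" for i using \<tau>c that by auto
  have key: "lam s = \<tau> j + (\<tau> (Suc j) - \<tau> j) * ((s - t j) / (t (Suc j) - t j))"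
    if j: "j < k" "t j \<le> s" "s \<le> t (Suc j)" for j s
  proof -
    define g where "g i = (\<tau> (Suc i) - \<tau> i) * r i s" for i
    have r_lo: "r i s = 1" if "i < j" for i
    proof -
      have "t (Suc i) \<le> t j" using chain_le[OF tc, of "Suc i" j] that j by auto
      then have "t (Suc i) - t i \<le> s - t i" using j by simp
      then have "1 \<le> (s - t i) / (t (Suc i) - t i)" using gap[of i] that j
        by (simp add: le_divide_eq)
      then show ?thesis unfolding r_def by simp
    qed
    have r_hi: "g i = 0" if "i \<in> {..<k} - {..<Suc j}" for i
    proof -
      have i: "j < i" "i < k" using that by auto
      have "t (Suc j) \<le> t i" using chain_le[OF tc, of "Suc j" i] i by auto
      then have "(s - t i) / (t (Suc i) - t i) \<le> 0" using gap[of i] i j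
        by (simp add: divide_le_0_iff)
      then show ?thesis unfolding g_def r_def by simp
    qed
    have rj: "r j s = (s - t j) / (t (Suc j) - t j)"
    proof -
      have "0 \<le> (s - t j) / (t (Suc j) - t j)" using gap[of j] j by simp
      moreover have "(s - t j) / (t (Suc j) - t j) \<le> 1" using gap[of j] j by simp
      ultimately show ?thesis unfolding r_def by simp
    qed
    have "lam s = sum g {..<k}" unfolding lam_def g_def by simp
    also have "\<dots> = sum g {..<Suc j}"
      using r_hi j by (intro sum.mono_neutral_right) auto
    also have "\<dots> = (\<Sum>i<j. \<tau> (Suc i) - \<tau> i) + g j"
      using r_lo by (simp add: g_def)
    also have "(\<Sum>i<j. \<tau> (Suc i) - \<tau> i) = \<tau> j - \<tau> 0" by (rule sum_lessThan_telescope)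
    finally show ?thesis using \<tau>0 rj by (simp add: g_def)
  qed
  have rmono: "r i s \<le> r i u" if "i < k" "s \<le> u" for i s u
  proof -
    have "(s - t i) / (t (Suc i) - t i) \<le> (u - t i) / (t (Suc i) - t i)"
      using gap[of i] that by (intro divide_right_mono) auto
    then show ?thesis unfolding r_def by linarith
  qed
  have lmono: "lam s \<le> lam u" if "s \<le> u" for s u
    unfolding lam_def using that gap\<tau> rmono
    by (intro sum_mono mult_left_mono) (auto simp: less_imp_le)
  have lam0: "lam 0 = 0" using key[of 0 0] k0 t0 \<tau>0 gap[of 0] by simp
  have lam1: "lam 1 = 1"
  proof -
    obtain j where j: "k = Suc j" using k0 by (cases k) auto
    have "t j \<le> 1" using chain_le[OF tc, of j k] j tk by simp
    then have "lam 1 = \<tau> j + (\<tau> (Suc j) - \<tau> j) * ((1 - t j) / (t (Suc j) - t j))"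
      using key[of j 1] j tk by simp
    also have "\<dots> = 1" using j tk \<tau>k gap[of j] by simp
    finally show ?thesis .
  qed
  have strict: "lam s < lam u" if su: "s < u" "s \<in> {0..1}" "u \<in> {0..1}" for s u
  proof -
    obtain j where j: "j < k" "t j \<le> s" "s < t (Suc j)"
      using locate[OF tc, of s] su t0 tk by auto
    have "r j s < r j u"
    proof -
      have rs: "r j s = (s - t j) / (t (Suc j) - t j)"
        using j gap[of j] unfolding r_def by simp
      have less1: "(s - t j) / (t (Suc j) - t j) < 1" using j gap[of j] by simp
      have "(s - t j) / (t (Suc j) - t j) < (u - t j) / (t (Suc j) - t j)"
        using gap[of j] j su by (intro divide_strict_right_mono) auto
      then show ?thesis unfolding rs using less1 unfolding r_def by linarith
    qed
    then have "(\<tau> (Suc j) - \<tau> j) * r j s < (\<tau> (Suc j) - \<tau> j) * r j u"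
      using gap\<tau>[of j] j by simp
    then show ?thesis unfolding lam_def using j su gap\<tau> rmono
      by (intro sum_strict_mono_ex1) (auto intro!: mult_left_mono simp: less_imp_le)
  qed
  have cont: "continuous_on {0..1} lam"
  proof -
    have gne: "\<forall>i\<in>{..<k}. t (Suc i) - t i \<noteq> 0" using gap by force
    show ?thesis unfolding lam_def r_def
      by (intro continuous_intros) (use gne in auto)
  qed
  have img: "lam ` {0..1} = {0..1}"
  proof
    show "lam ` {0..1} \<subseteq> {0..1}"
      using lmono[of 0] lmono[of _ 1] lam0 lam1 by fastforce
    show "{0..1} \<subseteq> lam ` {0..1}"
    proof
      fix y :: real assume y: "y \<in> {0..1}"
      then obtain s where "0 \<le> s" "s \<le> 1" "lam s = y"
        using IVT'[of lam 0 y 1] lam0 lam1 cont by auto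
      then show "y \<in> lam ` {0..1}" by auto
    qed
  qed
  have inj: "inj_on lam {0..1}"
  proof (rule inj_onI)
    fix s u assume "s \<in> {0..1}" "u \<in> {0..1}" "lam s = lam u"
    then show "s = u" using strict[of s u] strict[of u s] by (cases "s < u"; cases "u < s") auto
  qed
  obtain mu where "homeomorphism {0..1} {0..1} lam mu"
    using homeomorphism_compact[OF compact_Icc cont img inj] by auto
  moreover have "mono_on {0..1} lam" using lmono by (auto intro: mono_onI)
  ultimately have lamL: "lam \<in> Lambda" unfolding Lambda_def by auto
  have interv: "\<tau> j \<le> lam s \<and> lam s < \<tau> (Suc j)" if j: "j < k" "t j \<le> s" "s < t (Suc j)" for j s
  proof -
    define \<theta> where "\<theta> = (s - t j) / (t (Suc j) - t j)"
    have th: "0 \<le> \<theta>" "\<theta> < 1" unfolding \<theta>_def using j gap[of j] by auto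
    have ls: "lam s = \<tau> j + (\<tau> (Suc j) - \<tau> j) * \<theta>" unfolding \<theta>_def using key[of j s] j by simp
    have "(\<tau> (Suc j) - \<tau> j) * \<theta> < (\<tau> (Suc j) - \<tau> j) * 1"
      using th gap\<tau>[of j] j by (intro mult_strict_left_mono) auto
    moreover have "0 \<le> (\<tau> (Suc j) - \<tau> j) * \<theta>" using th gap\<tau>[of j] j by simp
    ultimately show ?thesis unfolding ls by simp
  qed
  have bound: "\<bar>lam s - s\<bar> \<le> \<delta>" if s: "s \<in> {0..1}" for s
  proof (cases "s = 1")
    case True then show ?thesis using lam1 close tk by auto
  next
    case False
    obtain j where j: "j < k" "t j \<le> s" "s < t (Suc j)"
      using locate[OF tc, of s] s False t0 tk by auto
    define \<theta> where "\<theta> = (s - t j) / (t (Suc j) - t j)"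
    have th: "0 \<le> \<theta>" "\<theta> \<le> 1" unfolding \<theta>_def using j gap[of j] by auto
    have ls: "lam s = \<tau> j + (\<tau> (Suc j) - \<tau> j) * \<theta>" unfolding \<theta>_def using key[of j s] j by simp
    have ss: "s = t j + (t (Suc j) - t j) * \<theta>" unfolding \<theta>_def using gap[of j] j by simp
    define a where "a = \<tau> j - t j"
    define b where "b = \<tau> (Suc j) - t (Suc j)"
    have ab: "0 \<le> a" "a \<le> \<delta>" "0 \<le> b" "b \<le> \<delta>" unfolding a_def b_def using close[rule_format, of j] close[rule_format, of "Suc j"] j by auto
    have eq: "lam s - s = a * (1 - \<theta>) + b * \<theta>" unfolding ls a_def b_def
      by (subst ss) (simp add: algebra_simps)
    have "0 \<le> a * (1 - \<theta>)" "0 \<le> b * \<theta>" using ab th by auto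
    moreover have "a * (1 - \<theta>) \<le> \<delta> * (1 - \<theta>)" using ab th by (intro mult_right_mono) auto
    moreover have "b * \<theta> \<le> \<delta> * \<theta>" using ab th by (intro mult_right_mono) auto
    ultimately show ?thesis unfolding eq by (simp add: algebra_simps)
  qed
  show ?thesis using lamL bound lam1 interv by (intro bexI[of _ lam]) auto
qed

lemma dyadic_finite: "finite (dyadic n)"
proof -
  have "dyadic n = (\<lambda>k. real k / 2 ^ n) ` {..(2::nat)^n}" unfolding dyadic_def by auto
  then show ?thesis by simp
qed

lemma dyadic_Max:
  assumes "d \<in> dyadic n"
  shows "\<bar>y d - x d\<bar> \<le> Max ((\<lambda>d. \<bar>y d - (x d::real)\<bar>) ` dyadic n)"
  using assms dyadic_finite[of n] by (intro Max_ge) auto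

lemma ceil_facts:
  fixes z :: real
  shows "z \<le> of_int \<lceil>z\<rceil>" "of_int \<lceil>z\<rceil> < z + 1"
proof -
  show "z \<le> of_int \<lceil>z\<rceil>" by simp
  have "\<lceil>z\<rceil> - 1 < \<lceil>z\<rceil>" by simp
  then have "of_int (\<lceil>z\<rceil> - 1) < z" by (simp only: less_ceiling_iff)
  then show "of_int \<lceil>z\<rceil> < z + 1" by simp
qed

lemma det_conv:
  fixes x :: "real \<Rightarrow> real" and y :: "nat \<Rightarrow> real \<Rightarrow> real"
  assumes cx: "cadlag x"
    and st: "\<forall>n\<ge>1. \<forall>k<(2::nat) ^ n. \<forall>t\<in>{real k / 2 ^ n..<real (k + 1) / 2 ^ n}.
           y n t = y n (real k / 2 ^ n)"
    and lim: "(\<lambda>n. Max ((\<lambda>d. \<bar>y n d - x d\<bar>) ` dyadic n)) \<longlonglongrightarrow> 0"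
  shows "(\<lambda>n. dJ1 (y n) x) \<longlonglongrightarrow> 0"
  unfolding tendsto_iff
proof (intro allI impI)
  fix e :: real assume e: "0 < e"
  define M where "M n = Max ((\<lambda>d. \<bar>y n d - x d\<bar>) ` dyadic n)" for n
  obtain k t where kt: "goodp x (e/4) k t" "t k = 1"
    using partition_exists[OF cx, of "e/4"] e by auto
  have tc: "\<forall>i<k. t i < t (Suc i)" and t0: "t 0 = 0"
    and osc: "\<forall>i<k. \<forall>u\<in>{t i..<t (Suc i)}. \<bar>x u - x (t i)\<bar> < e/4"
    using kt unfolding goodp_def by auto
  obtain Bx where Bx: "\<forall>u\<in>{0..1}. \<bar>x u\<bar> \<le> Bx" using cadlag_bounded[OF cx] by auto
  have inv: "(\<lambda>n. inverse ((2::real) ^ n)) \<longlonglongrightarrow> 0" by (rule LIMSEQ_inverse_realpow_zero) simp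
  have E1: "eventually (\<lambda>n. 1 \<le> n) sequentially" by (rule eventually_ge_at_top)
  have E2: "eventually (\<lambda>n. \<bar>M n\<bar> < e/4) sequentially"
    using tendstoD[OF lim, of "e/4"] e unfolding M_def by simp
  have E3: "eventually (\<lambda>n. inverse ((2::real) ^ n) < e/4) sequentially"
    using tendstoD[OF inv, of "e/4"] e by simp
  have E4: "eventually (\<lambda>n. \<forall>i\<in>{..<k}. inverse ((2::real) ^ n) < t (Suc i) - t i) sequentially"
  proof (rule eventually_ball_finite)
    show "\<forall>i\<in>{..<k}. eventually (\<lambda>n. inverse ((2::real) ^ n) < t (Suc i) - t i) sequentially"
    proof
      fix i assume "i \<in> {..<k}"
      then have "0 < t (Suc i) - t i" using tc by auto
      from tendstoD[OF inv this] show "eventually (\<lambda>n. inverse ((2::real) ^ n) < t (Suc i) - t i) sequentially"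
        by simp
    qed
  qed simp
  have "eventually (\<lambda>n. dJ1 (y n) x < e \<and> 0 \<le> dJ1 (y n) x) sequentially"
    using E1 E2 E3 E4
  proof eventually_elim
    case (elim n)
    define P where "P = (2::real) ^ n"
    have P: "0 < P" unfolding P_def by simp
    have Pinv: "inverse P = 1 / P" by (simp add: divide_inverse)
    have stn: "\<forall>k<(2::nat) ^ n. \<forall>t\<in>{real k / 2 ^ n..<real (k + 1) / 2 ^ n}. y n t = y n (real k / 2 ^ n)"
      using st[THEN spec, of n] elim(1) by (rule mp)
    obtain By where By: "\<forall>u\<in>{0..1}. \<bar>y n u\<bar> \<le> By" using step_bounded[OF stn] by auto
    define \<tau> where "\<tau> i = of_int \<lceil>t i * P\<rceil> / P" for i
    have tau_lo: "t i \<le> \<tau> i" for i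
      unfolding \<tau>_def using P ceil_facts(1)[of "t i * P"] by (simp add: le_divide_eq)
    have tau_hi: "\<tau> i < t i + inverse P" for i
    proof -
      have "of_int \<lceil>t i * P\<rceil> < t i * P + 1" by (rule ceil_facts(2))
      then have "of_int \<lceil>t i * P\<rceil> / P < (t i * P + 1) / P" using P by (intro divide_strict_right_mono) auto
      also have "\<dots> = t i + inverse P" using P by (simp add: divide_inverse distrib_right mult.assoc)
      finally show ?thesis unfolding \<tau>_def .
    qed
    have tau0: "\<tau> 0 = 0" unfolding \<tau>_def using t0 by simp
    have cP: "\<lceil>P\<rceil> = 2 ^ n" unfolding P_def by (metis ceiling_of_int of_int_numeral of_int_power)
    have tauk: "\<tau> k = 1" unfolding \<tau>_def using kt(2) cP P by (simp add: P_def)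
    have tauc: "\<forall>i<k. \<tau> i < \<tau> (Suc i)"
    proof (intro allI impI)
      fix i assume i: "i < k"
      have "\<tau> i < t i + inverse P" by (rule tau_hi)
      also have "\<dots> < t (Suc i)"
      proof -
        have "inverse ((2::real) ^ n) < t (Suc i) - t i" using elim(4) i by blast
        then show ?thesis unfolding P_def by linarith
      qed
      also have "\<dots> \<le> \<tau> (Suc i)" by (rule tau_lo)
      finally show "\<tau> i < \<tau> (Suc i)" .
    qed
    have close: "\<forall>i\<le>k. t i \<le> \<tau> i \<and> \<tau> i \<le> t i + inverse P"
      using tau_lo tau_hi less_imp_le by blast
    obtain lam where lam: "lam \<in> Lambda" "\<forall>s\<in>{0..1}. \<bar>lam s - s\<bar> \<le> inverse P" "lam 1 = 1"
      "\<forall>j<k. \<forall>s\<in>{t j..<t (Suc j)}. \<tau> j \<le> lam s \<and> lam s < \<tau> (Suc j)"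
      using construct_lam[OF tc tauc t0 tau0 kt(2) tauk close] by blast
    have main: "\<bar>y n (lam s) - x s\<bar> \<le> e/2 + M n" if s: "s \<in> {0..1}" for s
    proof (cases "s = 1")
      case True
      have "1 \<in> dyadic n" unfolding dyadic_def by (auto intro!: exI[of _ "2^n"])
      from dyadic_Max[OF this, of "y n" x] have "\<bar>y n 1 - x 1\<bar> \<le> M n" unfolding M_def .
      then show ?thesis using True lam(3) e by simp
    next
      case False
      obtain j where j: "j < k" "t j \<le> s" "s < t (Suc j)"
        using locate[OF tc, of s] s False t0 kt(2) by auto
      have ls: "\<tau> j \<le> lam s" "lam s < \<tau> (Suc j)" using lam(4) j by auto
      have "\<tau> (Suc j) \<le> \<tau> k" using chain_le[OF tauc, of "Suc j" k] j by simp
      then have l01: "0 \<le> lam s" "lam s < 1" using ls tauk tau_lo[of j] j t0 chain_le[OF tc, of 0 j]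
        by auto
      define c where "c = nat \<lfloor>lam s * 2 ^ n\<rfloor>"
      note df = dyadic_floor[OF l01, of n, folded c_def]
      define d where "d = real c / 2 ^ n"
      have yd: "y n (lam s) = y n d"
      proof -
        have "\<forall>t\<in>{real c / 2 ^ n..<real (c + 1) / 2 ^ n}. y n t = y n (real c / 2 ^ n)"
          using stn df(1) by blast
        then show ?thesis unfolding d_def using df(2,3) by (meson atLeastLessThan_iff)
      qed
      have dD: "d \<in> dyadic n" unfolding dyadic_def d_def using df(1)
        by (auto intro!: exI[of _ c])
      have cfl: "real c = of_int \<lfloor>lam s * P\<rfloor>" using df(4) unfolding P_def .
      have dP: "d = real c / P" unfolding d_def P_def ..
      have "of_int \<lceil>t j * P\<rceil> \<le> lam s * P" using ls(1) P unfolding \<tau>_def by (simp add: divide_le_eq)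
      then have "\<lceil>t j * P\<rceil> \<le> \<lfloor>lam s * P\<rfloor>" by (simp only: le_floor_iff)
      then have "of_int \<lceil>t j * P\<rceil> \<le> real c" unfolding cfl by (simp only: of_int_le_iff)
      then have "\<tau> j \<le> d" unfolding \<tau>_def dP using P by (simp add: divide_right_mono)
      then have d_lo: "t j \<le> d" using tau_lo[of j] by simp
      have "of_int \<lfloor>lam s * P\<rfloor> \<le> lam s * P" by (rule of_int_floor_le)
      also have "lam s * P < of_int \<lceil>t (Suc j) * P\<rceil>" using ls(2) P unfolding \<tau>_def
        by (simp add: less_divide_eq)
      finally have "\<lfloor>lam s * P\<rfloor> < \<lceil>t (Suc j) * P\<rceil>" by (simp only: of_int_less_iff)
      then have "of_int \<lfloor>lam s * P\<rfloor> < t (Suc j) * P" by (simp only: less_ceiling_iff)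
      then have "d < t (Suc j)" unfolding dP cfl using P by (simp add: divide_less_eq)
      with d_lo have "d \<in> {t j..<t (Suc j)}" by simp
      then have "\<bar>x d - x (t j)\<bar> < e/4" using osc j by auto
      moreover have "\<bar>x s - x (t j)\<bar> < e/4" using osc j by auto
      moreover have "\<bar>y n d - x d\<bar> \<le> M n" using dyadic_Max[OF dD, of "y n" x] unfolding M_def .
      ultimately show ?thesis unfolding yd by linarith
    qed
    have up: "dJ1 (y n) x \<le> inverse P + (e/2 + M n)"
      by (rule dJ1_bounds(2)[OF Bx By lam(1) lam(2)]) (use main in auto)
    have "inverse P < e/4" using elim(3) unfolding P_def .
    then have "dJ1 (y n) x < e" using up elim(2) by linarith
    moreover have "0 \<le> dJ1 (y n) x" by (rule dJ1_bounds(1)[OF Bx By])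
    ultimately show ?case by simp
  qed
  then show "eventually (\<lambda>n. dist (dJ1 (y n) x) 0 < e) sequentially"
    by eventually_elim (simp add: dist_real_def)
qed


theorem mainTheorem7:
  fixes M :: "'a measure" and X :: "'a \<Rightarrow> real \<Rightarrow> real"
    and Xn :: "nat \<Rightarrow> 'a \<Rightarrow> real \<Rightarrow> real"
  assumes "prob_space M"
    and "\<forall>t\<in>{0..1}. (\<lambda>\<omega>. X \<omega> t) \<in> borel_measurable M"
    and "\<forall>n\<ge>1. \<forall>t\<in>{0..1}. (\<lambda>\<omega>. Xn n \<omega> t) \<in> borel_measurable M"
    and "\<forall>\<omega>\<in>space M. cadlag (X \<omega>)"
    and "\<forall>n\<ge>1. \<forall>\<omega>\<in>space M. cadlag (Xn n \<omega>)"
    and "\<forall>n\<ge>1. \<forall>\<omega>\<in>space M. \<forall>k<(2::nat) ^ n. \<forall>t\<in>{real k / 2 ^ n..<real (k + 1) / 2 ^ n}.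
           Xn n \<omega> t = Xn n \<omega> (real k / 2 ^ n)"
    and "AE \<omega> in M. (\<lambda>n. Max ((\<lambda>d. \<bar>Xn n \<omega> d - X \<omega> d\<bar>) ` dyadic n)) \<longlonglongrightarrow> 0"
  shows "AE \<omega> in M. (\<lambda>n. dJ1 (Xn n \<omega>) (X \<omega>)) \<longlonglongrightarrow> 0"
  proof -
  have imp: "(\<lambda>n. Max ((\<lambda>d. \<bar>Xn n \<omega> d - X \<omega> d\<bar>) ` dyadic n)) \<longlonglongrightarrow> 0 \<longrightarrow>
      (\<lambda>n. dJ1 (Xn n \<omega>) (X \<omega>)) \<longlonglongrightarrow> 0" if w: "\<omega> \<in> space M" for \<omega>
  proof
    assume lim: "(\<lambda>n. Max ((\<lambda>d. \<bar>Xn n \<omega> d - X \<omega> d\<bar>) ` dyadic n)) \<longlonglongrightarrow> 0"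
    have cx: "cadlag (X \<omega>)" using assms(4) w by blast
    have st: "\<forall>n\<ge>1. \<forall>k<(2::nat) ^ n. \<forall>t\<in>{real k / 2 ^ n..<real (k + 1) / 2 ^ n}.
           Xn n \<omega> t = Xn n \<omega> (real k / 2 ^ n)" using assms(6) w by blast
    show "(\<lambda>n. dJ1 (Xn n \<omega>) (X \<omega>)) \<longlonglongrightarrow> 0"
      using det_conv[of "X \<omega>" "\<lambda>n. Xn n \<omega>", OF cx st lim] .
  qed
  show ?thesis using assms(7)
    by (rule AE_mp) (rule AE_I2, rule imp)
qed

end
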